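(* Let $\mathbf{B} \equiv \lambda xyz.\, x(yz)$, $\mathbf{S} \equiv \lambda xyz.\, xz(yz)$, and let $Y_0 \equiv \lambda f.\, \omega_f\omega_f$ with $\omega_f \equiv \lambda x.\, f(xx)$ (Curry's fixed point combinator). Then $\mathbf{B}Y_0 \neq_\beta \mathbf{B}Y_0\mathbf{S}$.
   Context: Terms of the untyped $\lambda$-calculus modulo $\alpha$-conversion; $=_\beta$ is $\beta$-convertibility; application associates to the left. *)

theory Defs
  imports Main
begin

datatype dB =
    Var nat
  | App dB dB
  | Abs dB

primrec lift :: "dB \<Rightarrow> nat \<Rightarrow> dB" where
  "lift (Var i) k = (if i < k then Var i else Var (i + 1))"
| "lift (App s t) k = App (lift s k) (lift t k)"
| "lift (Abs s) k = Abs (lift s (k + 1))"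

primrec subst :: "dB \<Rightarrow> dB \<Rightarrow> nat \<Rightarrow> dB" where
  "subst (Var i) s k =
     (if k < i then Var (i - 1) else if i = k then s else Var i)"
| "subst (App t u) s k = App (subst t s k) (subst u s k)"
| "subst (Abs t) s k = Abs (subst t (lift s 0) (k + 1))"

inductive beta :: "dB \<Rightarrow> dB \<Rightarrow> bool" where
  beta: "beta (App (Abs s) t) (subst s t 0)"
| appL: "beta s t \<Longrightarrow> beta (App s u) (App t u)"
| appR: "beta s t \<Longrightarrow> beta (App u s) (App u t)"
| abs:  "beta s t \<Longrightarrow> beta (Abs s) (Abs t)"

inductive beta_conv :: "dB \<Rightarrow> dB \<Rightarrow> bool" where
  refl: "beta_conv t t"
| step: "beta s t \<Longrightarrow> beta_conv s t"
| sym:  "beta_conv s t \<Longrightarrow> beta_conv t s"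
| trans: "beta_conv s t \<Longrightarrow> beta_conv t u \<Longrightarrow> beta_conv s u"

definition combB :: dB where
  "combB = Abs (Abs (Abs (App (Var 2) (App (Var 1) (Var 0)))))"

definition combS :: dB where
  "combS = Abs (Abs (Abs (App (App (Var 2) (Var 0)) (App (Var 1) (Var 0)))))"

text \<open>Curry's Y0 = \<lambda>f. omega_f omega_f, omega_f = \<lambda>x. f(xx); inside the binder of f.\<close>
definition omega_f :: dB where
  "omega_f = Abs (App (Var 1) (App (Var 0) (Var 0)))"

definition Y0 :: dB where
  "Y0 = Abs (App omega_f omega_f)"

end

theory Submission imports Defs begin

lemma lift_lift: "i < k + 1 \<Longrightarrow> lift (lift t i) (Suc k) = lift (lift t k) i"
  by (induct t arbitrary: i k) auto
lemma lift_subst [simp]: "j < i + 1 \<Longrightarrow> lift (subst t s j) i = subst (lift t (i + 1)) (lift s i) j"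
  by (induct t arbitrary: i j s) (simp_all add: diff_Suc lift_lift split: nat.split)
lemma lift_subst_lt: "i < j + 1 \<Longrightarrow> lift (subst t s j) i = subst (lift t i) (lift s i) (j + 1)"
  by (induct t arbitrary: i j s) (auto simp: lift_lift)
lemma subst_lift [simp]: "subst (lift t k) s k = t"
  by (induct t arbitrary: k s) simp_all
lemma subst_subst: "i < j + 1 \<Longrightarrow> subst (subst t (lift v i) (Suc j)) (subst u v j) i = subst (subst t u i) v j"
  by (induct t arbitrary: i j u v) (simp_all add: diff_Suc lift_lift [symmetric] lift_subst_lt split: nat.split)

inductive par :: "dB \<Rightarrow> dB \<Rightarrow> bool" where
  pvar: "par (Var n) (Var n)"
| pabs: "par s t \<Longrightarrow> par (Abs s) (Abs t)"
| papp: "par s s' \<Longrightarrow> par t t' \<Longrightarrow> par (App s t) (App s' t')"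
| pbeta: "par s s' \<Longrightarrow> par t t' \<Longrightarrow> par (App (Abs s) t) (subst s' t' 0)"

inductive_cases par_VarE: "par (Var n) t"
inductive_cases par_AbsE: "par (Abs s) t"
inductive_cases par_AppE: "par (App s t) u"

lemma par_refl: "par t t" by (induct t) (auto intro: par.intros)

lemma par_lift: "par t t' \<Longrightarrow> par (lift t n) (lift t' n)"
  by (induct t t' arbitrary: n rule: par.induct) (auto intro: par.intros)

lemma par_subst: "par t t' \<Longrightarrow> par s s' \<Longrightarrow> par (subst t s n) (subst t' s' n)"
proof (induct t t' arbitrary: s s' n rule: par.induct)
  case (pvar m) then show ?case by (auto intro: par.intros)
next
  case (pabs t t') then show ?case by (simp add: par.pabs par_lift)
next
  case (papp t t' u u') then show ?case by (auto intro: par.intros)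
next
  case (pbeta t t' u u')
  have "par (App (Abs (subst t (lift s 0) (Suc n))) (subst u s n))
            (subst (subst t' (lift s' 0) (Suc n)) (subst u' s' n) 0)"
    using pbeta by (auto intro!: par.pbeta par_lift)
  then show ?case by (simp add: subst_subst)
qed

lemma par_diamond: "par t u \<Longrightarrow> par t v \<Longrightarrow> \<exists>w. par u w \<and> par v w"
proof (induct t u arbitrary: v rule: par.induct)
  case (pvar n) then show ?case by (auto elim: par_VarE intro: par.intros)
next
  case (pabs s t) then show ?case by (auto elim!: par_AbsE intro: par.intros)
next
  case (papp s s' t t')
  show ?case
  proof (rule par_AppE[OF papp.prems])
    fix s2 t2 assume 1: "v = App s2 t2" "par s s2" "par t t2"
    then show ?thesis using papp by (meson par.papp)
  next
    fix s0 s2 t2 assume 2: "s = Abs s0" "v = subst s2 t2 0" "par s0 s2" "par t t2"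
    from papp(1) \<open>s = Abs s0\<close> obtain s1 where s1: "s' = Abs s1" "par s0 s1" by (auto elim: par_AbsE)
    from papp(2)[of "Abs s2"] 2 obtain w1 where "par s' w1" "par (Abs s2) w1" by (auto intro: par.intros)
    then obtain w1' where w1: "w1 = Abs w1'" "par s1 w1'" "par s2 w1'" using s1 by (auto elim!: par_AbsE)
    from papp(4)[of t2] 2 obtain w2 where "par t' w2" "par t2 w2" by auto
    then show ?thesis using 2 s1 w1 by (auto intro!: par.pbeta par_subst)
  qed
next
  case (pbeta s s' t t')
  show ?case
  proof (rule par_AppE[OF pbeta.prems])
    fix s2 t2 assume 1: "v = App s2 t2" "par (Abs s) s2" "par t t2"
    then obtain s3 where s3: "s2 = Abs s3" "par s s3" by (auto elim: par_AbsE)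
    from pbeta(2)[of s3] s3 obtain w1 where "par s' w1" "par s3 w1" by auto
    moreover from pbeta(4)[of t2] 1 obtain w2 where "par t' w2" "par t2 w2" by auto
    ultimately show ?thesis using 1 s3 by (auto intro!: par.pbeta par_subst)
  next
    fix s0 s2 t2 assume 2: "Abs s = Abs s0" "v = subst s2 t2 0" "par s0 s2" "par t t2"
    from pbeta(2)[of s2] 2 obtain w1 where "par s' w1" "par s2 w1" by auto
    moreover from pbeta(4)[of t2] 2 obtain w2 where "par t' w2" "par t2 w2" by auto
    ultimately show ?thesis using 2 by (auto intro!: par_subst)
  qed
qed

lemma par_strip: "par\<^sup>*\<^sup>* s t \<Longrightarrow> par s u \<Longrightarrow> \<exists>w. par t w \<and> par\<^sup>*\<^sup>* u w"
proof (induct rule: rtranclp_induct)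
  case base then show ?case by auto
next
  case (step t t2)
  then obtain w where "par t w" "par\<^sup>*\<^sup>* u w" by auto
  with step(2) obtain w2 where "par t2 w2" "par w w2" using par_diamond by blast
  then show ?case using \<open>par\<^sup>*\<^sup>* u w\<close> by (meson rtranclp.rtrancl_into_rtrancl)
qed

lemma par_conf: "par\<^sup>*\<^sup>* s u \<Longrightarrow> par\<^sup>*\<^sup>* s t \<Longrightarrow> \<exists>w. par\<^sup>*\<^sup>* t w \<and> par\<^sup>*\<^sup>* u w"
proof (induct rule: rtranclp_induct)
  case base then show ?case by auto
next
  case (step u u2)
  then obtain w where "par\<^sup>*\<^sup>* t w" "par\<^sup>*\<^sup>* u w" by auto
  with par_strip[OF this(2) step(2)] obtain w2 where "par w w2" "par\<^sup>*\<^sup>* u2 w2" by auto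
  then show ?case using \<open>par\<^sup>*\<^sup>* t w\<close> by (meson rtranclp.rtrancl_into_rtrancl)
qed

lemma beta_par: "beta s t \<Longrightarrow> par s t"
  by (induct rule: beta.induct) (auto intro: par.intros par_refl)

lemma rtc_abs: "beta\<^sup>*\<^sup>* s t \<Longrightarrow> beta\<^sup>*\<^sup>* (Abs s) (Abs t)"
  by (induct rule: rtranclp_induct) (auto intro: rtranclp.rtrancl_into_rtrancl beta.abs)
lemma rtc_appL: "beta\<^sup>*\<^sup>* s t \<Longrightarrow> beta\<^sup>*\<^sup>* (App s u) (App t u)"
  by (induct rule: rtranclp_induct) (auto intro: rtranclp.rtrancl_into_rtrancl beta.appL)
lemma rtc_appR: "beta\<^sup>*\<^sup>* s t \<Longrightarrow> beta\<^sup>*\<^sup>* (App u s) (App u t)"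
  by (induct rule: rtranclp_induct) (auto intro: rtranclp.rtrancl_into_rtrancl beta.appR)

lemma par_beta: "par s t \<Longrightarrow> beta\<^sup>*\<^sup>* s t"
proof (induct rule: par.induct)
  case (pvar n) then show ?case by simp
next
  case (pabs s t) then show ?case by (simp add: rtc_abs)
next
  case (papp s s' t t') then show ?case by (meson rtc_appL rtc_appR rtranclp_trans)
next
  case (pbeta s s' t t')
  have "beta\<^sup>*\<^sup>* (App (Abs s) t) (App (Abs s') t')" using pbeta by (meson rtc_abs rtc_appL rtc_appR rtranclp_trans)
  then show ?case by (meson beta.beta rtranclp.rtrancl_into_rtrancl)
qed

lemma beta_rtc_par: "beta\<^sup>*\<^sup>* s t \<Longrightarrow> par\<^sup>*\<^sup>* s t"
  by (induct rule: rtranclp_induct) (auto intro: rtranclp.rtrancl_into_rtrancl beta_par)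
lemma par_rtc_beta: "par\<^sup>*\<^sup>* s t \<Longrightarrow> beta\<^sup>*\<^sup>* s t"
  by (induct rule: rtranclp_induct) (auto intro: rtranclp_trans par_beta)

lemma beta_conf: "beta\<^sup>*\<^sup>* s t \<Longrightarrow> beta\<^sup>*\<^sup>* s u \<Longrightarrow> \<exists>w. beta\<^sup>*\<^sup>* t w \<and> beta\<^sup>*\<^sup>* u w"
  using par_conf beta_rtc_par par_rtc_beta by meson

lemma conv_join: "beta_conv s t \<Longrightarrow> \<exists>w. beta\<^sup>*\<^sup>* s w \<and> beta\<^sup>*\<^sup>* t w"
proof (induct rule: beta_conv.induct)
  case (trans s t u)
  then obtain w1 w2 where "beta\<^sup>*\<^sup>* s w1" "beta\<^sup>*\<^sup>* t w1" "beta\<^sup>*\<^sup>* t w2" "beta\<^sup>*\<^sup>* u w2" by auto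
  moreover obtain w where "beta\<^sup>*\<^sup>* w1 w" "beta\<^sup>*\<^sup>* w2 w" using beta_conf calculation(2,3) by blast
  ultimately show ?case by (meson rtranclp_trans)
qed auto


inductive_cases bVarE: "beta (Var i) t"
inductive_cases bAbsE: "beta (Abs s) t"
inductive_cases bAppE: "beta (App s u) t"

lemma combS_nf: "\<not> beta combS x"
  unfolding combS_def by (auto elim!: bAbsE bAppE bVarE)
lemma combB_nf: "\<not> beta combB x"
  unfolding combB_def by (auto elim!: bAbsE bAppE bVarE)
lemma omega_nf: "\<not> beta omega_f x"
  unfolding omega_f_def by (auto elim!: bAbsE bAppE bVarE)

lemma lift_combS[simp]: "lift combS j = combS" by (simp add: combS_def)
lemma subst_combS[simp]: "subst combS s j = combS" by (simp add: combS_def)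

primrec P :: "dB \<Rightarrow> nat \<Rightarrow> nat \<Rightarrow> bool" where
  "P (Var i) a b = (i \<noteq> b)"
| "P (App s t) a b = ((s = Var a \<and> t = Var b) \<or> (P s a b \<and> P t a b))"
| "P (Abs s) a b = P s (Suc a) (Suc b)"

primrec occ :: "dB \<Rightarrow> nat \<Rightarrow> bool" where
  "occ (Var i) n = (i = n)"
| "occ (App s t) n = (occ s n \<or> occ t n)"
| "occ (Abs s) n = occ s (Suc n)"

lemma nocc_P: "\<not> occ t b \<Longrightarrow> P t a b"
  by (induct t arbitrary: a b) auto
lemma nocc_lift: "\<not> occ (lift t j) j"
  by (induct t arbitrary: j) auto

definition lf :: "nat \<Rightarrow> nat \<Rightarrow> nat" where "lf i j = (if i < j then i else Suc i)"

lemma P_lift: "P u a b \<Longrightarrow> P (lift u j) (lf a j) (lf b j)"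
proof (induct u arbitrary: a b j)
  case (Var i) then show ?case by (auto simp: lf_def)
next
  case (App s t)
  from App.prems consider "s = Var a \<and> t = Var b" | "P s a b \<and> P t a b" by auto
  then show ?case
  proof cases
    case 1 then show ?thesis by (simp add: lf_def)
  next
    case 2 then show ?thesis by (simp add: App.hyps)
  qed
next
  case (Abs s)
  have "lf (Suc a) (Suc j) = Suc (lf a j)" "lf (Suc b) (Suc j) = Suc (lf b j)" by (auto simp: lf_def)
  moreover have "P (lift s (Suc j)) (lf (Suc a) (Suc j)) (lf (Suc b) (Suc j))" using Abs by simp
  ultimately show ?case by simp
qed

lemma P_subst: "P s (Suc a) (Suc b) \<Longrightarrow> j \<le> a \<Longrightarrow> j \<le> b \<Longrightarrow> P u a b \<Longrightarrow> P (subst s u j) a b"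
proof (induct s arbitrary: a b j u)
  case (Var i) then show ?case by auto
next
  case (App s1 s2) then show ?case by auto
next
  case (Abs s)
  have "P (lift u 0) (Suc a) (Suc b)" using P_lift[OF Abs(5), of 0] by (simp add: lf_def)
  then show ?case using Abs by simp
qed

lemma P_beta: "beta s t \<Longrightarrow> P s a b \<Longrightarrow> P t a b"
proof (induct s t arbitrary: a b rule: beta.induct)
  case (beta s t) then show ?case by (auto intro: P_subst)
qed (auto elim: bVarE)

inductive GM :: "dB \<Rightarrow> bool" where
  m1: "GM (App combB Y)"
| m2: "P t 1 0 \<Longrightarrow> GM (Abs (Abs t))"

lemma GM_beta: "GM s \<Longrightarrow> beta s t \<Longrightarrow> GM t"
proof (induct rule: GM.induct)
  case (m1 Y)
  have PL: "P (lift (lift Y 0) 0) (Suc 0) 0" by (rule nocc_P, rule nocc_lift)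
  from m1 show ?case
  proof (rule bAppE)
    fix s0 assume "combB = Abs s0" "t = subst s0 Y 0"
    then have "s0 = Abs (Abs (App (Var 2) (App (Var 1) (Var 0))))" "t = subst s0 Y 0"
      by (simp_all add: combB_def)
    then have "t = Abs (Abs (App (lift (lift Y 0) 0) (App (Var 1) (Var 0))))"
      by simp
    then show ?thesis using PL GM.m2[of "App (lift (lift Y 0) 0) (App (Var 1) (Var 0))"] by simp
  qed (auto simp: combB_nf GM.m1)
next
  case (m2 u)
  from m2(2) obtain u' where "beta u u'" "t = Abs (Abs u')" by (auto elim!: bAbsE)
  then show ?case using m2(1) P_beta GM.m2 by blast
qed

lemma GM_rtc: "beta\<^sup>*\<^sup>* s t \<Longrightarrow> GM s \<Longrightarrow> GM t"
  by (induct rule: rtranclp_induct) (auto intro: GM_beta)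


inductive Yb :: "dB \<Rightarrow> bool" where
  yb0: "Yb (App omega_f omega_f)"
| yb1: "Yb t \<Longrightarrow> Yb (App (Var 0) t)"

lemma omega_lift[simp]: "lift omega_f (Suc j) = omega_f" by (simp add: omega_f_def)
lemma omega_subst[simp]: "subst omega_f s (Suc j) = omega_f" by (simp add: omega_f_def)
lemma omega_subst0: "subst omega_f G 0 = Abs (App (lift G 0) (App (Var 0) (Var 0)))"
  by (simp add: omega_f_def)

lemma Yb_lift: "Yb t \<Longrightarrow> lift t (Suc j) = t" by (induct rule: Yb.induct) auto
lemma Yb_subst: "Yb t \<Longrightarrow> subst t s (Suc j) = t" by (induct rule: Yb.induct) auto

lemma Yb_beta: "Yb t \<Longrightarrow> beta t t' \<Longrightarrow> Yb t'"
proof (induct arbitrary: t' rule: Yb.induct)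
  case yb0
  show ?case
  proof (rule bAppE[OF yb0])
    fix s0 assume a: "omega_f = Abs s0" "t' = subst s0 omega_f 0"
    then have "s0 = App (Var 1) (App (Var 0) (Var 0))" by (simp add: omega_f_def)
    with a have "t' = App (Var 0) (App omega_f omega_f)" by simp
    then show ?thesis by (simp add: Yb.intros)
  qed (simp_all add: omega_nf)
next
  case (yb1 t)
  show ?case
    by (rule bAppE[OF yb1(3)]) (auto elim: bVarE intro: Yb.intros yb1(2))
qed

definition F1 :: "nat \<Rightarrow> dB" where
  "F1 k = Abs (Abs (App (App (Var (Suc (Suc k))) (Var 0)) (App (Var 1) (Var 0))))"
definition Fz :: "nat \<Rightarrow> dB \<Rightarrow> bool" where
  "Fz k G \<longleftrightarrow> G = App combS (Var k) \<or> G = F1 k"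
definition W2 :: "nat \<Rightarrow> dB" where
  "W2 k = Abs (Abs (App (App (Var (Suc (Suc k))) (Var 0)) (App (App (Var 1) (Var 1)) (Var 0))))"
definition Om :: "nat \<Rightarrow> dB \<Rightarrow> bool" where
  "Om k w \<longleftrightarrow> (\<exists>G. Fz (Suc k) G \<and> w = Abs (App G (App (Var 0) (Var 0)))) \<or> w = W2 k"

lemma F1_nf: "\<not> beta (F1 k) x" unfolding F1_def by (auto elim!: bAbsE bAppE bVarE)
lemma W2_nf: "\<not> beta (W2 k) x" unfolding W2_def by (auto elim!: bAbsE bAppE bVarE)
lemma lift_F1: "j \<le> k \<Longrightarrow> lift (F1 k) j = F1 (Suc k)" by (simp add: F1_def)
lemma subst_F1: "j \<le> k \<Longrightarrow> subst (F1 (Suc k)) s j = F1 k" by (simp add: F1_def)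
lemma lift_W2: "j \<le> k \<Longrightarrow> lift (W2 k) j = W2 (Suc k)" by (simp add: W2_def)
lemma subst_W2: "j \<le> k \<Longrightarrow> subst (W2 (Suc k)) s j = W2 k" by (simp add: W2_def)

lemma Fz_lift: "Fz k G \<Longrightarrow> j \<le> k \<Longrightarrow> Fz (Suc k) (lift G j)"
  unfolding Fz_def by (auto simp: lift_F1)
lemma Fz_subst: "Fz (Suc k) G \<Longrightarrow> j \<le> k \<Longrightarrow> Fz k (subst G s j)"
  unfolding Fz_def by (auto simp: subst_F1)
lemma Om_lift: "Om k w \<Longrightarrow> j \<le> k \<Longrightarrow> Om (Suc k) (lift w j)"
  unfolding Om_def by (auto simp: lift_W2 intro: Fz_lift)
lemma Om_subst: "Om (Suc k) w \<Longrightarrow> j \<le> k \<Longrightarrow> Om k (subst w s j)"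
  unfolding Om_def by (auto simp: subst_W2 intro: Fz_subst)

lemma Fz_beta: "Fz k G \<Longrightarrow> beta G G' \<Longrightarrow> Fz k G'"
proof -
  assume f: "Fz k G" and b: "beta G G'"
  show ?thesis
  proof (cases "G = F1 k")
    case True then show ?thesis using b F1_nf by simp
  next
    case False
    then have G: "G = App combS (Var k)" using f by (simp add: Fz_def)
    show ?thesis
    proof (rule bAppE[OF b[unfolded G]])
      fix s0 assume a: "combS = Abs s0" "G' = subst s0 (Var k) 0"
      then have "s0 = Abs (Abs (App (App (Var 2) (Var 0)) (App (Var 1) (Var 0))))" by (simp add: combS_def)
      with a have "G' = F1 k" by (simp add: F1_def)
      then show ?thesis by (simp add: Fz_def)
    qed (auto simp: combS_nf elim: bVarE)
  qed
qed

lemma Om_beta: "Om k w \<Longrightarrow> beta w w' \<Longrightarrow> Om k w'"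
proof -
  assume o: "Om k w" and b: "beta w w'"
  show ?thesis
  proof (cases "w = W2 k")
    case True then show ?thesis using b W2_nf by simp
  next
    case False
    then obtain G where G: "Fz (Suc k) G" "w = Abs (App G (App (Var 0) (Var 0)))" using o by (auto simp: Om_def)
    from b G(2) obtain u where u: "beta (App G (App (Var 0) (Var 0))) u" "w' = Abs u" by (auto elim: bAbsE)
    show ?thesis
    proof (rule bAppE[OF u(1)])
      fix g assume a: "G = Abs g" "u = subst g (App (Var 0) (Var 0)) 0"
      have "G = F1 (Suc k)" using G(1) a(1) by (auto simp: Fz_def)
      then have "g = Abs (App (App (Var (Suc (Suc (Suc k)))) (Var 0)) (App (Var 1) (Var 0)))"
        using a(1) by (simp add: F1_def)
      with a u(2) have "w' = W2 k" by (simp add: W2_def)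
      then show ?thesis by (simp add: Om_def)
    next
      fix G' assume "beta G G'" "u = App G' (App (Var 0) (Var 0))"
      then show ?thesis using G u(2) Fz_beta unfolding Om_def by blast
    next
      fix x assume "beta (App (Var 0) (Var 0)) x" then show ?thesis by (auto elim: bAppE bVarE)
    qed
  qed
qed


inductive Core :: "nat \<Rightarrow> dB \<Rightarrow> bool" and Ev :: "nat \<Rightarrow> nat \<Rightarrow> dB \<Rightarrow> bool" where
  cY: "Yb t \<Longrightarrow> Fz k G \<Longrightarrow> Core k (App (Abs t) G)"
| cO: "Om k w \<Longrightarrow> Om k w' \<Longrightarrow> Core k (App w w')"
| cF: "Fz k G \<Longrightarrow> Core k c \<Longrightarrow> Core k (App G c)"
| cA: "Ev (Suc k) 0 e \<Longrightarrow> Core k (Abs e)"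
| eC: "Core k c \<Longrightarrow> Ev k v (App c (Var v))"
| eZ: "Ev k v e \<Longrightarrow> Ev k v (App (App (Var k) (Var v)) e)"

lemma Core_notVar: "Core k c \<Longrightarrow> c \<noteq> Var i"
  by (cases rule: Core.cases) auto

lemma Core_Ev_lift:
  shows "Core k c \<Longrightarrow> (\<forall>j. j \<le> k \<longrightarrow> Core (Suc k) (lift c j))"
    and "Ev k v e \<Longrightarrow> (\<forall>j. v < j \<longrightarrow> j \<le> k \<longrightarrow> Ev (Suc k) v (lift e j))"
proof (induct rule: Core_Ev.inducts)
  case (cY t k G) then show ?case by (auto simp: Yb_lift intro: Core_Ev.cY Fz_lift)
next
  case (cO k w w') then show ?case by (auto intro: Core_Ev.cO Om_lift)
next
  case (cF k G c) then show ?case by (auto intro: Core_Ev.cF Fz_lift)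
next
  case (cA k e) then show ?case by (auto intro: Core_Ev.cA)
next
  case (eC k c v) then show ?case by (auto intro: Core_Ev.eC)
next
  case (eZ k v e) then show ?case by (auto intro: Core_Ev.eZ)
qed

lemma Core_Ev_subst:
  shows "Core k' c \<Longrightarrow> (\<forall>k j s. k' = Suc k \<longrightarrow> j \<le> k \<longrightarrow> Core k (subst c s j))"
    and "Ev k' v e \<Longrightarrow> (\<forall>k j s. k' = Suc k \<longrightarrow> v < j \<longrightarrow> j \<le> k \<longrightarrow> Ev k v (subst e s j))"
proof (induct rule: Core_Ev.inducts)
  case (cY t k G) then show ?case by (auto simp: Yb_subst intro: Core_Ev.cY Fz_subst)
next
  case (cO k w w') then show ?case by (auto intro: Core_Ev.cO Om_subst)
next
  case (cF k G c) then show ?case by (auto intro: Core_Ev.cF Fz_subst)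
next
  case (cA k e) then show ?case by (auto intro: Core_Ev.cA)
next
  case (eC k c v) then show ?case by (auto intro: Core_Ev.eC)
next
  case (eZ k v e) then show ?case by (auto intro: Core_Ev.eZ)
qed

lemma Ev_subst0:
  shows "Core k' c \<Longrightarrow> True"
    and "Ev k' v' e \<Longrightarrow> (\<forall>k v. k' = Suc k \<longrightarrow> v' = 0 \<longrightarrow> Ev k v (subst e (Var v) 0))"
proof (induct rule: Core_Ev.inducts)
  case (eC k c v) then show ?case using Core_Ev_subst(1) by (auto intro: Core_Ev.eC)
next
  case (eZ k v e) then show ?case by (auto intro: Core_Ev.eZ)
qed auto

lemma Yb_core: "Yb t \<Longrightarrow> Fz k G \<Longrightarrow> Core k (subst t G 0)"
proof (induct rule: Yb.induct)
  case yb0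
  have "Om k (subst omega_f G 0)" unfolding omega_subst0 Om_def using Fz_lift[OF yb0, of 0] by auto
  then show ?case by (simp add: Core_Ev.cO)
next
  case (yb1 t) then show ?case by (simp add: Core_Ev.cF)
qed


lemma Core_Ev_beta:
  shows "Core k c \<Longrightarrow> (\<forall>c'. beta c c' \<longrightarrow> Core k c')"
    and "Ev k v e \<Longrightarrow> (\<forall>e'. beta e e' \<longrightarrow> Ev k v e')"
proof (induct rule: Core_Ev.inducts)
  case (cY t k G)
  show ?case
  proof (intro allI impI)
    fix c' assume b: "beta (App (Abs t) G) c'"
    show "Core k c'"
    proof (rule bAppE[OF b])
      fix s0 assume "Abs t = Abs s0" "c' = subst s0 G 0"
      then show ?thesis using cY Yb_core by simp
    next
      fix x assume "beta (Abs t) x" "c' = App x G"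
      then show ?thesis using cY by (auto elim!: bAbsE intro: Core_Ev.cY Yb_beta)
    next
      fix x assume "beta G x" "c' = App (Abs t) x"
      then show ?thesis using cY by (auto intro: Core_Ev.cY Fz_beta)
    qed
  qed
next
  case (cO k w w')
  show ?case
  proof (intro allI impI)
    fix c' assume b: "beta (App w w') c'"
    show "Core k c'"
    proof (rule bAppE[OF b])
      fix s0 assume a: "w = Abs s0" "c' = subst s0 w' 0"
      show ?thesis
      proof (cases "w = W2 k")
        case True
        then have "s0 = Abs (App (App (Var (Suc (Suc k))) (Var 0)) (App (App (Var 1) (Var 1)) (Var 0)))"
          using a(1) by (simp add: W2_def)
        with a(2) have c': "c' = Abs (App (App (Var (Suc k)) (Var 0)) (App (App (lift w' 0) (lift w' 0)) (Var 0)))"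
          by simp
        have "Om (Suc k) (lift w' 0)" using Om_lift[OF cO(2)] by simp
        then show ?thesis unfolding c' by (intro Core_Ev.intros)
      next
        case False
        then obtain G where G: "Fz (Suc k) G" "w = Abs (App G (App (Var 0) (Var 0)))" using cO(1) by (auto simp: Om_def)
        with a(1) have "s0 = App G (App (Var 0) (Var 0))" by simp
        with a(2) have c': "c' = App (subst G w' 0) (App w' w')" by simp
        show ?thesis unfolding c' using Fz_subst[OF G(1), of 0] cO(2) by (auto intro: Core_Ev.intros)
      qed
    next
      fix x assume "beta w x" "c' = App x w'"
      then show ?thesis using cO by (auto intro: Core_Ev.cO Om_beta)
    next
      fix x assume "beta w' x" "c' = App w x"
      then show ?thesis using cO by (auto intro: Core_Ev.cO Om_beta)
    qed
  qed
next
  case (cF k G c)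
  show ?case
  proof (intro allI impI)
    fix c' assume b: "beta (App G c) c'"
    show "Core k c'"
    proof (rule bAppE[OF b])
      fix g assume a: "G = Abs g" "c' = subst g c 0"
      have "G = F1 k" using cF(1) a(1) by (auto simp: Fz_def)
      then have "g = Abs (App (App (Var (Suc (Suc k))) (Var 0)) (App (Var 1) (Var 0)))"
        using a(1) by (simp add: F1_def)
      with a(2) have c': "c' = Abs (App (App (Var (Suc k)) (Var 0)) (App (lift c 0) (Var 0)))" by simp
      have "Core (Suc k) (lift c 0)" using Core_Ev_lift(1)[OF cF(2)] by simp
      then show ?thesis unfolding c' by (intro Core_Ev.intros)
    next
      fix x assume "beta G x" "c' = App x c"
      then show ?thesis using cF by (auto intro: Core_Ev.cF Fz_beta)
    next
      fix x assume "beta c x" "c' = App G x"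
      then show ?thesis using cF by (auto intro: Core_Ev.cF)
    qed
  qed
next
  case (cA k e)
  then show ?case by (auto elim!: bAbsE intro: Core_Ev.cA)
next
  case (eC k c v)
  show ?case
  proof (intro allI impI)
    fix e' assume b: "beta (App c (Var v)) e'"
    show "Ev k v e'"
    proof (rule bAppE[OF b])
      fix s0 assume a: "c = Abs s0" "e' = subst s0 (Var v) 0"
      have "Ev (Suc k) 0 s0" using eC(1) a(1) by (auto elim: Core.cases)
      then show ?thesis using Ev_subst0(2) a(2) by blast
    next
      fix x assume "beta c x" "e' = App x (Var v)"
      then show ?thesis using eC by (auto intro: Core_Ev.eC)
    next
      fix x assume "beta (Var v) x" then show ?thesis by (auto elim: bVarE)
    qed
  qed
next
  case (eZ k v e)
  show ?case
  proof (intro allI impI)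
    fix e' assume b: "beta (App (App (Var k) (Var v)) e) e'"
    show "Ev k v e'"
      by (rule bAppE[OF b]) (auto elim: bAppE bVarE intro: Core_Ev.eZ eZ(2)[rule_format])
  qed
qed


definition Wp :: "nat \<Rightarrow> dB" where
  "Wp k = Abs (App (App (Var (Suc (Suc k))) (Var (Suc k))) (App (Var 0) (Var 0)))"

lemma Wp_nf: "\<not> beta (Wp k) x" unfolding Wp_def by (auto elim!: bAbsE bAppE bVarE)

inductive Cp :: "nat \<Rightarrow> dB \<Rightarrow> bool" where
  pY: "Yb t \<Longrightarrow> Cp k (App (Abs t) (App (Var (Suc k)) (Var k)))"
| pO: "Cp k (App (Wp k) (Wp k))"
| pF: "Cp k c \<Longrightarrow> Cp k (App (App (Var (Suc k)) (Var k)) c)"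

lemma Cp_notAbs: "Cp k c \<Longrightarrow> c \<noteq> Abs x" by (cases rule: Cp.cases) auto

lemma Yb_cp: "Yb t \<Longrightarrow> Cp k (subst t (App (Var (Suc k)) (Var k)) 0)"
proof (induct rule: Yb.induct)
  case yb0
  have "subst omega_f (App (Var (Suc k)) (Var k)) 0 = Wp k" by (simp add: omega_subst0 Wp_def)
  then show ?case by (simp add: Cp.pO)
next
  case (yb1 t) then show ?case by (simp add: Cp.pF)
qed

lemma Cp_beta: "Cp k c \<Longrightarrow> beta c c' \<Longrightarrow> Cp k c'"
proof (induct arbitrary: c' rule: Cp.induct)
  case (pY t k)
  show ?case
  proof (rule bAppE[OF pY(2)])
    fix s0 assume "Abs t = Abs s0" "c' = subst s0 (App (Var (Suc k)) (Var k)) 0"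
    then show ?thesis using pY Yb_cp by simp
  next
    fix x assume "beta (Abs t) x" "c' = App x (App (Var (Suc k)) (Var k))"
    then show ?thesis using pY by (auto elim!: bAbsE intro: Cp.pY Yb_beta)
  next
    fix x assume "beta (App (Var (Suc k)) (Var k)) x" then show ?thesis by (auto elim: bAppE bVarE)
  qed
next
  case (pO k)
  show ?case
  proof (rule bAppE[OF pO])
    fix s0 assume a: "Wp k = Abs s0" "c' = subst s0 (Wp k) 0"
    then have "s0 = App (App (Var (Suc (Suc k))) (Var (Suc k))) (App (Var 0) (Var 0))" by (simp add: Wp_def)
    with a(2) have "c' = App (App (Var (Suc k)) (Var k)) (App (Wp k) (Wp k))" by simp
    then show ?thesis by (simp add: Cp.intros)
  qed (simp_all add: Wp_nf)
next
  case (pF k c)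
  show ?case
    by (rule bAppE[OF pF(3)]) (auto elim: bAppE bVarE intro: Cp.pF pF(2))
qed

lemma Cp_core: "Cp k b \<Longrightarrow> Core k (subst b combS (Suc k))"
proof (induct rule: Cp.induct)
  case (pY t k)
  have "Fz k (App combS (Var k))" by (simp add: Fz_def)
  then show ?case using pY by (simp add: Yb_subst Core_Ev.cY)
next
  case (pO k)
  have "Fz (Suc k) (App combS (Var (Suc k)))" by (simp add: Fz_def)
  then have "Om k (subst (Wp k) combS (Suc k))" by (auto simp: Wp_def Om_def)
  then show ?case by (simp add: Core_Ev.cO)
next
  case (pF k c)
  have "Fz k (App combS (Var k))" by (simp add: Fz_def)
  then show ?case using pF by (simp add: Core_Ev.cF)
qed

inductive GN :: "dB \<Rightarrow> bool" where
  n1: "Yb t \<Longrightarrow> GN (App (App combB (Abs t)) combS)"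
| n2: "Cp 0 b \<Longrightarrow> GN (App (Abs (Abs b)) combS)"
| n3: "Core 0 c \<Longrightarrow> GN (Abs c)"

lemma GN_beta: "GN s \<Longrightarrow> beta s r \<Longrightarrow> GN r"
proof (induct rule: GN.induct)
  case (n1 t)
  show ?case
  proof (rule bAppE[OF n1(2)])
    fix s0 assume "App combB (Abs t) = Abs s0" then show ?thesis by simp
  next
    fix x assume b: "beta (App combB (Abs t)) x" and r: "r = App x combS"
    show ?thesis
    proof (rule bAppE[OF b])
      fix s0 assume a: "combB = Abs s0" "x = subst s0 (Abs t) 0"
      then have "s0 = Abs (Abs (App (Var 2) (App (Var 1) (Var 0))))" by (simp add: combB_def)
      with a(2) have "x = Abs (Abs (App (lift (lift (Abs t) 0) 0) (App (Var 1) (Var 0))))" by simp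
      moreover have "lift (lift (Abs t) 0) 0 = Abs t" using Yb_lift[OF n1(1)] by simp
      ultimately have "x = Abs (Abs (App (Abs t) (App (Var (Suc 0)) (Var 0))))" by simp
      then show ?thesis using r n1(1) by (auto intro: GN.n2 Cp.pY)
    next
      fix y assume "beta combB y" then show ?thesis by (simp add: combB_nf)
    next
      fix y assume "beta (Abs t) y" "x = App combB y"
      then show ?thesis using r n1(1) by (auto elim!: bAbsE intro: GN.n1 Yb_beta)
    qed
  next
    fix x assume "beta combS x" then show ?thesis by (simp add: combS_nf)
  qed
next
  case (n2 b)
  show ?case
  proof (rule bAppE[OF n2(2)])
    fix s0 assume a: "Abs (Abs b) = Abs s0" "r = subst s0 combS 0"
    then have "s0 = Abs b" by simp
    with a(2) have "r = Abs (subst b combS (Suc 0))" by simp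
    then show ?thesis using Cp_core[OF n2(1)] by (simp add: GN.n3)
  next
    fix x assume "beta (Abs (Abs b)) x" "r = App x combS"
    then show ?thesis using n2(1) by (auto elim!: bAbsE intro: GN.n2 Cp_beta)
  next
    fix x assume "beta combS x" then show ?thesis by (simp add: combS_nf)
  qed
next
  case (n3 c)
  then show ?case using Core_Ev_beta(1) by (auto elim!: bAbsE intro: GN.n3)
qed

lemma GN_rtc: "beta\<^sup>*\<^sup>* s t \<Longrightarrow> GN s \<Longrightarrow> GN t"
  by (induct rule: rtranclp_induct) (auto intro: GN_beta)

lemma Ev_notP:
  shows "Core k c \<Longrightarrow> True"
    and "Ev k v e \<Longrightarrow> \<not> P e k v"
proof (induct rule: Core_Ev.inducts)
  case (eC k c v) then show ?case using Core_notVar by auto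
qed auto

lemma GM_GN: "GM u \<Longrightarrow> GN u \<Longrightarrow> False"
proof (induct rule: GM.induct)
  case (m1 Y)
  then show ?case
  proof (cases rule: GN.cases)
    case (n1 t) then show ?thesis by (simp add: combB_def)
  next
    case (n2 b)
    then have "b = Abs (App (Var 2) (App (Var 1) (Var 0)))" by (simp add: combB_def)
    then show ?thesis using n2 Cp_notAbs by blast
  qed
next
  case (m2 t)
  then have "Core 0 (Abs t)" by (auto elim: GN.cases)
  then have "Ev (Suc 0) 0 t" by (auto elim: Core.cases)
  then show ?case using Ev_notP(2) m2(1) by simp
qed

theorem proposition3p5:
  shows "\<not> beta_conv (App combB Y0) (App (App combB Y0) combS)"
proof
  assume "beta_conv (App combB Y0) (App (App combB Y0) combS)"
  then obtain u where u: "beta\<^sup>*\<^sup>* (App combB Y0) u" "beta\<^sup>*\<^sup>* (App (App combB Y0) combS) u"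
    using conv_join by blast
  have "GM u" using GM_rtc[OF u(1)] GM.m1 by blast
  moreover have "GN (App (App combB Y0) combS)" unfolding Y0_def by (intro GN.n1 Yb.yb0)
  then have "GN u" using GN_rtc[OF u(2)] by blast
  ultimately show False using GM_GN by blast
qed

end
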